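(* Let $\bar\mu=(\mu,\mu_1,\mu_2)\in\{+,-\}^3$ and let $\mathfrak m_{\bar\mu}$ be the multiplier satisfying $R_\mu\mathcal N_{\bar\mu}(R^{-1}_{\mu_1}G_1,R^{-1}_{\mu_2}G_2)=Q_{\bar\mu}[\mathfrak m_{\bar\mu}](G_1,G_2)$ for all scalar $G_1,G_2$. Then $Q_{\bar\mu}[\mathfrak m_{\bar\mu}](G_1,G_2)$ is a finite linear combination (with constant coefficients) of bilinear expressions of the form $$|\nabla|e^{-\mu it\Lambda}D_0\big[(D_1e^{\mu_1it\Lambda}G_1)\cdot(D_2e^{\mu_2it\Lambda}G_2)\big],$$ where each of $D_0,D_1,D_2$ is a product of operators from $\{\Lambda,\sqrt{1-\Lambda^2},\partial_1/|\nabla_h|,\partial_2/|\nabla_h|\}$. The same statement holds with these expressions replaced by $e^{-\mu it\Lambda}D_0[(D_1e^{\mu_1it\Lambda}G_1)\cdot(|\nabla|D_2e^{\mu_2it\Lambda}G_2)]$.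
   Context: $\hat f(\xi)=\int f(x)e^{-ix\cdot\xi}dx$. $\Lambda(\xi)=\xi_3/|\xi|$; $\Lambda$, $\sqrt{1-\Lambda^2}$, $e^{\pm it\Lambda}$ denote the Fourier multipliers with symbols $\Lambda(\xi)$, $\sqrt{1-\Lambda(\xi)^2}$, $e^{\pm it\Lambda(\xi)}$; $\nabla_h=(\partial_1,\partial_2)$. $\mathbb P_L=\mathrm{Id}-\nabla\Delta^{-1}\nabla\cdot$, $\mathbb P_\pm=\frac12(\mathrm{Id}\pm|\nabla|^{-1}\nabla\times)$. $\mathcal N_{\bar\mu}(\vec g_1,\vec g_2)=-e^{-\mu it\Lambda}\mathbb P_\mu\mathbb P_L\nabla\cdot(e^{\mu_1it\Lambda}\vec g_1\otimes e^{\mu_2it\Lambda}\vec g_2)$, $(\vec a\otimes\vec b)_{ij}=a_ib_j$, $(\nabla\cdot M)_j=\sum_i\partial_iM_{ij}$. $R_\pm\vec v=\frac12\vec e_3\cdot(|\nabla_h|^{-1}\nabla\times\vec v\pm|\nabla||\nabla_h|^{-1}\vec v)$; for scalar $G$, $\widehat{R^{-1}_\pm G}(\xi)=-i\hat G(\xi)(\vec\Gamma_1\pm i\vec\Gamma_2)$ with $\vec\Gamma_1=(-\xi_2/|\xi_h|,\xi_1/|\xi_h|,0)$, $\vec\Gamma_2=\frac{\xi}{|\xi|}\times\vec\Gamma_1$. $\mathcal F\{Q_{\bar\mu}[\mathfrak m](f_1,f_2)\}(\xi)=(2\pi)^{-3}\int e^{it\Phi_{\bar\mu}(\xi,\eta)}\mathfrak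 m(\xi,\eta)\hat f_1(\xi-\eta)\hat f_2(\eta)d\eta$, $\Phi_{\bar\mu}=-\mu\Lambda(\xi)+\mu_1\Lambda(\xi-\eta)+\mu_2\Lambda(\eta)$. *)

theory Defs
  imports "HOL-Analysis.Analysis"
begin

text \<open>Everything is formulated on the Fourier side (symbols). Frequencies are
  xi :: real^3; complex vectors are complex^3. Signs mu are reals in {-1,1}.\<close>

definition Lam :: "real^3 \<Rightarrow> real" where
  "Lam xi = xi$3 / norm xi"

definition hnorm :: "real^3 \<Rightarrow> real" where
  "hnorm xi = sqrt ((xi$1)^2 + (xi$2)^2)"

definition cvec :: "real^3 \<Rightarrow> complex^3" where
  "cvec v = (\<chi> i. complex_of_real (v$i))"

text \<open>complex bilinear dot product (no conjugation) and complex cross product\<close>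
definition cdot :: "complex^3 \<Rightarrow> complex^3 \<Rightarrow> complex" where
  "cdot a b = (\<Sum>i\<in>UNIV. a$i * b$i)"

definition ccross :: "complex^3 \<Rightarrow> complex^3 \<Rightarrow> complex^3" where
  "ccross a b = vector [a$2 * b$3 - a$3 * b$2,
                        a$3 * b$1 - a$1 * b$3,
                        a$1 * b$2 - a$2 * b$1]"

definition Gamma1 :: "real^3 \<Rightarrow> real^3" where
  "Gamma1 xi = vector [- xi$2 / hnorm xi, xi$1 / hnorm xi, 0]"

definition Gamma2 :: "real^3 \<Rightarrow> real^3" where
  "Gamma2 xi = cross3 ((1 / norm xi) *\<^sub>R xi) (Gamma1 xi)"

text \<open>symbol of R^{-1}_mu: hat(R^{-1}_mu G)(xi) = Rinv_sym mu xi * hat G(xi)\<close>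
definition Rinv_sym :: "real \<Rightarrow> real^3 \<Rightarrow> complex^3" where
  "Rinv_sym mu xi = (- \<i>) *s (cvec (Gamma1 xi) + (complex_of_real mu * \<i>) *s cvec (Gamma2 xi))"

text \<open>symbol of P_L = Id - nabla Delta^{-1} nabla\<cdot>\<close>
definition PL_sym :: "real^3 \<Rightarrow> complex^3 \<Rightarrow> complex^3" where
  "PL_sym xi v = v - (cdot (cvec xi) v / complex_of_real ((norm xi)^2)) *s cvec xi"

text \<open>symbol of P_mu = 1/2 (Id + mu |nabla|^{-1} nabla\<times>)\<close>
definition Pmu_sym :: "real \<Rightarrow> real^3 \<Rightarrow> complex^3 \<Rightarrow> complex^3" where
  "Pmu_sym mu xi v = (1/2) *s (v + complex_of_real (mu / norm xi) *s ccross (\<i> *s cvec xi) v)"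

text \<open>symbol of R_mu v = 1/2 e_3\<cdot>(|nabla_h|^{-1} nabla\<times>v + mu |nabla| |nabla_h|^{-1} v)\<close>
definition Rmu_sym :: "real \<Rightarrow> real^3 \<Rightarrow> complex^3 \<Rightarrow> complex" where
  "Rmu_sym mu xi v = (1/2) * ((ccross (\<i> *s cvec xi) v)$3 / complex_of_real (hnorm xi)
                     + complex_of_real (mu * norm xi / hnorm xi) * v$3)"

text \<open>The multiplier m_{mu-bar}(xi,eta) with
  R_mu N_{mu-bar}(R^{-1}_{mu1} G1, R^{-1}_{mu2} G2) = Q_{mu-bar}[m](G1,G2):
  composition of the symbols of -P_mu P_L nabla\<cdot>( a \<otimes> b ), where
  (nabla\<cdot>(a\<otimes>b))_j has symbol sum_i i xi_i a_i(xi-eta) b_j(eta);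
  the phase factors e^{\<plusminus> it Lambda} are those collected in Phi.\<close>
definition m_sym :: "real \<Rightarrow> real \<Rightarrow> real \<Rightarrow> real^3 \<Rightarrow> real^3 \<Rightarrow> complex" where
  "m_sym mu mu1 mu2 xi eta =
     Rmu_sym mu xi (Pmu_sym mu xi (PL_sym xi
       (- ((\<i> * cdot (cvec xi) (Rinv_sym mu1 (xi - eta))) *s Rinv_sym mu2 eta))))"

datatype gen = GLam | GSqrt | GD1 | GD2

fun gen_sym :: "gen \<Rightarrow> real^3 \<Rightarrow> complex" where
  "gen_sym GLam xi = complex_of_real (Lam xi)"
| "gen_sym GSqrt xi = complex_of_real (sqrt (1 - (Lam xi)^2))"
| "gen_sym GD1 xi = \<i> * complex_of_real (xi$1 / hnorm xi)"
| "gen_sym GD2 xi = \<i> * complex_of_real (xi$2 / hnorm xi)"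

definition prod_sym :: "gen list \<Rightarrow> real^3 \<Rightarrow> complex" where
  "prod_sym ds xi = prod_list (map (\<lambda>d. gen_sym d xi) ds)"

end

theory Submission
  imports Defs
begin


lemma norm3: "(norm (z::real^3))^2 = z$1^2 + z$2^2 + z$3^2"
  by (simp add: norm_eq_sqrt_inner inner_vec_def sum_3 power2_eq_square)

lemma basics:
  fixes z :: "real^3"
  assumes h: "hnorm z \<noteq> 0"
  shows "hnorm z > 0" "norm z > 0" "(hnorm z)^2 = z$1^2 + z$2^2"
    "sqrt (1 - (Lam z)^2) = hnorm z / norm z"
proof -
  show hp: "hnorm z > 0" using h unfolding hnorm_def by (simp add: order_le_neq_trans)
  show hs: "(hnorm z)^2 = z$1^2 + z$2^2" unfolding hnorm_def by simp
  have nn: "norm z \<noteq> 0" using h unfolding hnorm_def by (auto simp: vec_eq_iff)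
  then show np: "norm z > 0" by simp
  have "1 - (Lam z)^2 = ((norm z)^2 - (z$3)^2)/(norm z)^2"
    using nn by (simp add: Lam_def power_divide field_simps)
  also have "\<dots> = (hnorm z)^2/(norm z)^2" using norm3[of z] hs by simp
  also have "\<dots> = (hnorm z / norm z)^2" by (simp add: power_divide)
  finally have "1 - (Lam z)^2 = (hnorm z / norm z)^2" .
  then show "sqrt (1 - (Lam z)^2) = hnorm z / norm z" using hp np by simp
qed

lemma G1:
  fixes z :: "real^3"
  assumes h: "hnorm z \<noteq> 0"
  shows "cvec (Gamma1 z) = vector [\<i> * gen_sym GD2 z, - \<i> * gen_sym GD1 z, 0]"
  unfolding cvec_def Gamma1_def
  by (simp add: vec_eq_iff forall_3 vector_3 of_real_minus mult.assoc[symmetric])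

lemma G2:
  fixes z :: "real^3"
  assumes h: "hnorm z \<noteq> 0"
  shows "cvec (Gamma2 z) = vector [\<i> * gen_sym GLam z * gen_sym GD1 z,
      \<i> * gen_sym GLam z * gen_sym GD2 z, gen_sym GSqrt z]"
proof -
  note b = basics[OF h]
  have e3: "z$1 / norm z * (z$1 / hnorm z) - z$3 / norm z * 0 + z$2 / norm z * (z$2 / hnorm z)
      = hnorm z / norm z"
  proof -
    have "z$1 / norm z * (z$1 / hnorm z) - z$3 / norm z * 0 + z$2 / norm z * (z$2 / hnorm z)
      = (z$1^2 + z$2^2) / (norm z * hnorm z)" by (simp add: add_divide_distrib power2_eq_square)
    also have "\<dots> = (hnorm z)^2 / (norm z * hnorm z)" using b(3) by simp
    also have "\<dots> = hnorm z / norm z" using b(1) by (simp add: power2_eq_square)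
    finally show ?thesis .
  qed
  show ?thesis
    unfolding cvec_def Gamma2_def Gamma1_def
    apply (simp only: gen_sym.simps b(4))
    apply (simp add: vec_eq_iff forall_3 vector_3 cross3_def Lam_def)
    using e3 b apply (auto simp: field_simps)
    by (metis (no_types) of_real_add of_real_mult)
qed

lemma NN:
  fixes z :: "real^3"
  assumes h: "hnorm z \<noteq> 0"
  shows "cvec z = complex_of_real (norm z) *s vector [- \<i> * gen_sym GSqrt z * gen_sym GD1 z,
      - \<i> * gen_sym GSqrt z * gen_sym GD2 z, gen_sym GLam z]"
proof -
  note b = basics[OF h]
  show ?thesis
    unfolding cvec_def
    apply (simp only: gen_sym.simps b(4))
    using b by (simp add: vec_eq_iff forall_3 vector_3 Lam_def field_simps)
qed

lemma rels:
  fixes z :: "real^3"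
  assumes h: "hnorm z \<noteq> 0"
  shows "(gen_sym GLam z)^2 + (gen_sym GSqrt z)^2 = 1"
        "(gen_sym GD1 z)^2 + (gen_sym GD2 z)^2 = -1"
        "gen_sym GSqrt z \<noteq> 0"
        "complex_of_real (hnorm z) = complex_of_real (norm z) * gen_sym GSqrt z"
proof -
  note b = basics[OF h]
  have "\<bar>z$3\<bar> \<le> norm z" by (rule component_le_norm_cart)
  then have "\<bar>z$3\<bar>^2 \<le> (norm z)^2" by (rule power_mono) simp
  then have z3: "(z$3)^2 \<le> (norm z)^2" by simp
  have "(Lam z)^2 = (z$3)^2 / (norm z)^2" by (simp add: Lam_def power_divide)
  also have "\<dots> \<le> 1" using z3 b(2) by simp
  finally have L1: "(Lam z)^2 \<le> 1" .
  then have "(Lam z)^2 + (sqrt (1 - (Lam z)^2))^2 = 1" by simp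
  then have "complex_of_real ((Lam z)^2 + (sqrt (1 - (Lam z)^2))^2) = 1" by simp
  then show "(gen_sym GLam z)^2 + (gen_sym GSqrt z)^2 = 1"
    by (simp only: gen_sym.simps of_real_add of_real_power)
  have hz: "z$1 \<noteq> 0 \<or> z$2 \<noteq> 0" using h unfolding hnorm_def by auto
  have "(z$1/hnorm z)^2 + (z$2/hnorm z)^2 = 1" using b(1,3) hz
    by (simp add: power_divide add_divide_distrib[symmetric])
  then have ab: "complex_of_real ((z$1/hnorm z)^2 + (z$2/hnorm z)^2) = 1" by simp
  have e: "(gen_sym GD1 z)^2 + (gen_sym GD2 z)^2 = - complex_of_real ((z$1/hnorm z)^2 + (z$2/hnorm z)^2)"
    by (simp add: power_mult_distrib power_divide)
  show "(gen_sym GD1 z)^2 + (gen_sym GD2 z)^2 = -1" by (simp only: e ab)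
  show "gen_sym GSqrt z \<noteq> 0" using b by simp
  show "complex_of_real (hnorm z) = complex_of_real (norm z) * gen_sym GSqrt z"
    using b by simp
qed

lemma alg_core:
  fixes l s p q m :: complex and u :: "complex^3"
  assumes r1: "l^2+s^2 = 1" "p^2+q^2 = -1" "s \<noteq> 0" and m2: "m^2 = 1"
    and nd: "n = vector [- \<i> * s * p, - \<i> * s * q, l]"
  shows "(1/2) * ((ccross (\<i> *s n) ((1/2) *s ((u - cdot n u *s n) + m *s ccross (\<i> *s n) (u - cdot n u *s n))))$3 / s
            + (m / s) * ((1/2) *s ((u - cdot n u *s n) + m *s ccross (\<i> *s n) (u - cdot n u *s n)))$3)
       = (1/2) * (\<i> * cdot (vector [\<i> * q, - \<i> * p, 0]) u
           + m * cdot (vector [\<i> * l * p, \<i> * l * q, s]) u)"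
proof -
  define u1 where "u1 = u$1"
  define u2 where "u2 = u$2"
  define u3 where "u3 = u$3"
  have uu: "u = vector [u1,u2,u3]" by (simp add: vec_eq_iff forall_3 vector_3 u1_def u2_def u3_def)
  have i2: "\<i>^2 = (-1::complex)" by simp
  show ?thesis
    apply (simp add: nd uu cdot_def sum_3 ccross_def vector_scalar_mult_def)
    apply (simp add: r1(3) field_simps)
    using r1 m2 i2 by algebra
qed

lemma core1:
  fixes xi :: "real^3" and u :: "complex^3"
  assumes h: "hnorm xi \<noteq> 0" and mu: "mu \<in> {-1,1::real}"
  shows "Rmu_sym mu xi (Pmu_sym mu xi (PL_sym xi u)) =
     (1/2) * (\<i> * cdot (cvec (Gamma1 xi)) u + complex_of_real mu * cdot (cvec (Gamma2 xi)) u)"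
proof -
  note b = basics[OF h] and r = rels[OF h]
  define l where "l = gen_sym GLam xi"
  define s where "s = gen_sym GSqrt xi"
  define p where "p = gen_sym GD1 xi"
  define q where "q = gen_sym GD2 xi"
  define rr where "rr = complex_of_real (norm xi)"
  define m where "m = complex_of_real mu"
  define n :: "complex^3" where "n = vector [- \<i> * s * p, - \<i> * s * q, l]"
  have rr0: "rr \<noteq> 0" using b unfolding rr_def by simp
  have m2: "m^2 = 1" using mu unfolding m_def by auto
  have r1: "l^2+s^2 = 1" "p^2+q^2 = -1" "s \<noteq> 0" using r unfolding l_def s_def p_def q_def by auto
  have cv: "cvec xi = rr *s n" unfolding n_def rr_def l_def s_def p_def q_def by (rule NN[OF h])
  have cr: "ccross (\<i> *s (rr *s n)) v = rr *s ccross (\<i> *s n) v" for v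
    by (simp add: ccross_def vec_eq_iff forall_3 vector_3 vector_scalar_mult_def algebra_simps)
  have cd: "cdot (rr *s n) v = rr * cdot n v" for v
    by (simp add: cdot_def sum_3 vector_scalar_mult_def algebra_simps)
  have PL: "PL_sym xi v = v - cdot n v *s n" for v
    unfolding PL_sym_def cv cd
    by (simp add: vec_eq_iff vector_scalar_mult_def rr0 power2_eq_square flip: rr_def)
  have PM: "Pmu_sym mu xi v = (1/2) *s (v + m *s ccross (\<i> *s n) v)" for v
    unfolding Pmu_sym_def cv cr
    by (simp add: vec_eq_iff vector_scalar_mult_def rr0 flip: rr_def m_def)
  have RM: "Rmu_sym mu xi v = (1/2) * ((ccross (\<i> *s n) v)$3 / s + (m / s) * v$3)" for v
    unfolding Rmu_sym_def cv cr
    by (simp add: r(4) vector_scalar_mult_def rr0 s_def flip: rr_def m_def)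
  show ?thesis
    unfolding PL PM RM G1[OF h] G2[OF h] l_def[symmetric] s_def[symmetric] p_def[symmetric]
      q_def[symmetric] m_def[symmetric]
    by (rule alg_core[OF r1 m2 n_def])
qed

definition cond :: "real^3 \<Rightarrow> real^3 \<Rightarrow> bool" where
  "cond xi eta \<longleftrightarrow> hnorm xi \<noteq> 0 \<and> hnorm eta \<noteq> 0 \<and> hnorm (xi - eta) \<noteq> 0"

definition ev :: "(complex \<times> gen list \<times> gen list \<times> gen list) list \<Rightarrow> real^3 \<Rightarrow> real^3 \<Rightarrow> complex" where
  "ev t xi eta = (\<Sum>(c, d0, d1, d2) \<leftarrow> t. c * prod_sym d0 xi * prod_sym d1 (xi - eta) * prod_sym d2 eta)"

definition Pc :: "(real^3 \<Rightarrow> real^3 \<Rightarrow> complex) \<Rightarrow> bool" where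
  "Pc f \<longleftrightarrow> (\<exists>t. \<forall>xi eta. cond xi eta \<longrightarrow> f xi eta = ev t xi eta)"

lemma prod_sym_append: "prod_sym (d @ e) x = prod_sym d x * prod_sym e x"
  by (simp add: prod_sym_def)

lemma ev_append: "ev (t1 @ t2) x y = ev t1 x y + ev t2 x y"
  by (simp add: ev_def)

definition mulT where
  "mulT t1 t2 = concat (map (\<lambda>(c,d0,d1,d2). map (\<lambda>(c',e0,e1,e2). (c*c', d0@e0, d1@e1, d2@e2)) t2) t1)"

lemma ev_mul1: "ev (map (\<lambda>(c',e0,e1,e2). (c*c', d0@e0, d1@e1, d2@e2)) t2) x y
   = (c * prod_sym d0 x * prod_sym d1 (x - y) * prod_sym d2 y) * ev t2 x y"
  by (induction t2) (auto simp: ev_def prod_sym_append algebra_simps)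

lemma ev_mul: "ev (mulT t1 t2) x y = ev t1 x y * ev t2 x y"
proof (induction t1)
  case Nil then show ?case by (simp add: mulT_def ev_def)
next
  case (Cons a t1)
  obtain c d0 d1 d2 where a: "a = (c,d0,d1,d2)" by (cases a) auto
  have "ev (mulT (a # t1) t2) x y = ev (map (\<lambda>(c',e0,e1,e2). (c*c', d0@e0, d1@e1, d2@e2)) t2) x y
        + ev (mulT t1 t2) x y"
    by (simp add: mulT_def a ev_append[symmetric])
  also have "\<dots> = ev (a # t1) x y * ev t2 x y"
    by (simp add: ev_mul1 Cons a) (simp add: ev_def algebra_simps)
  finally show ?case .
qed

lemma Pc_add: "Pc f \<Longrightarrow> Pc g \<Longrightarrow> Pc (\<lambda>x y. f x y + g x y)"
proof -
  assume "Pc f" "Pc g"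
  then obtain t1 t2 where t1: "\<And>x y. cond x y \<Longrightarrow> f x y = ev t1 x y"
    and t2: "\<And>x y. cond x y \<Longrightarrow> g x y = ev t2 x y" unfolding Pc_def by blast
  show ?thesis unfolding Pc_def
    by (rule exI[of _ "t1 @ t2"]) (simp add: ev_append t1 t2)
qed

lemma Pc_mult: "Pc f \<Longrightarrow> Pc g \<Longrightarrow> Pc (\<lambda>x y. f x y * g x y)"
proof -
  assume "Pc f" "Pc g"
  then obtain t1 t2 where t1: "\<And>x y. cond x y \<Longrightarrow> f x y = ev t1 x y"
    and t2: "\<And>x y. cond x y \<Longrightarrow> g x y = ev t2 x y" unfolding Pc_def by blast
  show ?thesis unfolding Pc_def
    by (rule exI[of _ "mulT t1 t2"]) (simp add: ev_mul t1 t2)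
qed

lemma Pc_const: "Pc (\<lambda>x y. c)"
  unfolding Pc_def by (rule exI[of _ "[(c,[],[],[])]"]) (simp add: ev_def prod_sym_def)

lemma Pc_uminus: "Pc f \<Longrightarrow> Pc (\<lambda>x y. - f x y)"
  using Pc_mult[OF Pc_const[of "-1"]] by simp

lemma Pc_diff: "Pc f \<Longrightarrow> Pc g \<Longrightarrow> Pc (\<lambda>x y. f x y - g x y)"
  using Pc_add[of f "\<lambda>x y. - g x y"] Pc_uminus[of g] by simp

lemma Pc_g0: "Pc (\<lambda>x y. gen_sym g x)"
  unfolding Pc_def by (rule exI[of _ "[(1,[g],[],[])]"]) (simp add: ev_def prod_sym_def)

lemma Pc_g1: "Pc (\<lambda>x y. gen_sym g (x - y))"
  unfolding Pc_def by (rule exI[of _ "[(1,[],[g],[])]"]) (simp add: ev_def prod_sym_def)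

lemma Pc_g2: "Pc (\<lambda>x y. gen_sym g y)"
  unfolding Pc_def by (rule exI[of _ "[(1,[],[],[g])]"]) (simp add: ev_def prod_sym_def)


definition nv :: "real^3 \<Rightarrow> complex^3" where
  "nv z = vector [- \<i> * gen_sym GSqrt z * gen_sym GD1 z, - \<i> * gen_sym GSqrt z * gen_sym GD2 z, gen_sym GLam z]"
definition g1v :: "real^3 \<Rightarrow> complex^3" where
  "g1v z = vector [\<i> * gen_sym GD2 z, - \<i> * gen_sym GD1 z, 0]"
definition g2v :: "real^3 \<Rightarrow> complex^3" where
  "g2v z = vector [\<i> * gen_sym GLam z * gen_sym GD1 z, \<i> * gen_sym GLam z * gen_sym GD2 z, gen_sym GSqrt z]"
definition rv :: "real \<Rightarrow> real^3 \<Rightarrow> complex^3" where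
  "rv mu z = (- \<i>) *s (g1v z + (complex_of_real mu * \<i>) *s g2v z)"

lemma Rinv_eq: "hnorm z \<noteq> 0 \<Longrightarrow> Rinv_sym mu z = rv mu z"
  unfolding Rinv_sym_def rv_def g1v_def g2v_def by (simp add: G1 G2)

lemma cdot_scale: "cdot x (c *s y) = c * cdot x y"
  by (simp add: cdot_def sum_3 algebra_simps)

lemma cdot_minus: "cdot x (- y) = - cdot x y"
  by (simp add: cdot_def sum_3 algebra_simps)

lemma cdot_diff: "cdot (x - y) z = cdot x z - cdot y z"
  by (simp add: cdot_def sum_3 algebra_simps)

lemma cvec_diff: "cvec (x - y) = cvec x - cvec y"
  by (simp add: cvec_def vec_eq_iff)

lemma m_eq:
  assumes c: "cond xi eta" and mu: "mu \<in> {-1,1::real}"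
  shows "m_sym mu mu1 mu2 xi eta = - (\<i> * cdot (cvec xi) (Rinv_sym mu1 (xi - eta))) *
      ((1/2) * (\<i> * cdot (cvec (Gamma1 xi)) (Rinv_sym mu2 eta) + complex_of_real mu * cdot (cvec (Gamma2 xi)) (Rinv_sym mu2 eta)))"
proof -
  have h: "hnorm xi \<noteq> 0" using c unfolding cond_def by simp
  show ?thesis unfolding m_sym_def core1[OF h mu] cdot_minus cdot_scale
    by (simp add: algebra_simps)
qed

lemma cdot_smult_left: "cdot (c *s x) y = c * cdot x y"
  by (simp add: cdot_def sum_3 algebra_simps)

definition E1 where
  "E1 mu mu1 mu2 xi eta = - (\<i> * cdot (nv xi) (rv mu1 (xi - eta))) *
      ((1/2) * (\<i> * cdot (g1v xi) (rv mu2 eta) + complex_of_real mu * cdot (g2v xi) (rv mu2 eta)))"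
definition E2 where
  "E2 mu mu1 mu2 xi eta = - (\<i> * cdot (nv eta) (rv mu1 (xi - eta))) *
      ((1/2) * (\<i> * cdot (g1v xi) (rv mu2 eta) + complex_of_real mu * cdot (g2v xi) (rv mu2 eta)))"

lemma vec_forms:
  assumes h: "hnorm z \<noteq> 0"
  shows "cvec z = complex_of_real (norm z) *s nv z" "cvec (Gamma1 z) = g1v z"
    "cvec (Gamma2 z) = g2v z" "Rinv_sym mu z = rv mu z"
  unfolding nv_def g1v_def g2v_def
  by (rule NN[OF h], rule G1[OF h], rule G2[OF h], rule Rinv_eq[OF h, unfolded g1v_def g2v_def])

lemma alg_orth:
  fixes l s p q m :: complex
  assumes "p^2+q^2 = -1"
  shows "cdot (vector [- \<i> * s * p, - \<i> * s * q, l])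
     ((- \<i>) *s (vector [\<i> * q, - \<i> * p, 0] + (m * \<i>) *s vector [\<i> * l * p, \<i> * l * q, s])) = 0"
proof -
  have "cdot (vector [- \<i> * s * p, - \<i> * s * q, l])
     ((- \<i>) *s (vector [\<i> * q, - \<i> * p, 0] + (m * \<i>) *s vector [\<i> * l * p, \<i> * l * q, s]))
    = m * l * s * (p^2 + q^2 + 1)"
    by (simp add: cdot_def sum_3 vector_scalar_mult_def algebra_simps power2_eq_square)
  then show ?thesis using assms by simp
qed
lemma orth: "hnorm z \<noteq> 0 \<Longrightarrow> cdot (cvec z) (Rinv_sym mu z) = 0"
proof -
  assume h: "hnorm z \<noteq> 0"
  have "cdot (nv z) (rv mu z) = 0" unfolding nv_def rv_def g1v_def g2v_def
    by (rule alg_orth[OF rels(2)[OF h]])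
  then show ?thesis by (simp only: vec_forms(1,4)[OF h] cdot_smult_left mult_zero_right)
qed

lemma cdot_switch:
  assumes c: "cond xi eta"
  shows "cdot (cvec xi) (Rinv_sym mu1 (xi - eta)) = cdot (cvec eta) (Rinv_sym mu1 (xi - eta))"
proof -
  have "cdot (cvec (xi - eta)) (Rinv_sym mu1 (xi - eta)) = 0" using c orth unfolding cond_def by blast
  then show ?thesis by (simp add: cvec_diff cdot_diff)
qed

lemma m_E1:
  assumes c: "cond xi eta" and mu: "mu \<in> {-1,1::real}"
  shows "m_sym mu mu1 mu2 xi eta = complex_of_real (norm xi) * E1 mu mu1 mu2 xi eta"
proof -
  have h: "hnorm xi \<noteq> 0" "hnorm eta \<noteq> 0" "hnorm (xi - eta) \<noteq> 0" using c unfolding cond_def by auto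
  show ?thesis
    unfolding m_eq[OF c mu] E1_def vec_forms(1,2,3)[OF h(1)] vec_forms(4)[OF h(2)] vec_forms(4)[OF h(3)]
      cdot_smult_left
    by (simp only: mult_ac minus_mult_right)
qed

lemma m_E2:
  assumes c: "cond xi eta" and mu: "mu \<in> {-1,1::real}"
  shows "m_sym mu mu1 mu2 xi eta = complex_of_real (norm eta) * E2 mu mu1 mu2 xi eta"
proof -
  have h: "hnorm xi \<noteq> 0" "hnorm eta \<noteq> 0" "hnorm (xi - eta) \<noteq> 0" using c unfolding cond_def by auto
  show ?thesis
    unfolding m_eq[OF c mu] unfolding cdot_switch[OF c] unfolding E2_def vec_forms(2,3)[OF h(1)] vec_forms(1)[OF h(2)]
      vec_forms(4)[OF h(2)] vec_forms(4)[OF h(3)] cdot_smult_left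
    by (simp only: mult_ac minus_mult_right)
qed

lemmas Pc_intros = Pc_add Pc_diff Pc_mult Pc_uminus Pc_const Pc_g0 Pc_g1 Pc_g2

lemma Pc_divc: "Pc f \<Longrightarrow> Pc (\<lambda>x y. f x y / c)"
  using Pc_mult[of f "\<lambda>x y. inverse c", OF _ Pc_const] by (simp add: divide_inverse)

lemmas Pc_intros2 = Pc_intros Pc_divc

lemma Pc_E1: "Pc (E1 mu mu1 mu2)"
  unfolding E1_def nv_def g1v_def g2v_def rv_def
  apply (simp add: cdot_def sum_3 vector_scalar_mult_def del: gen_sym.simps)
  apply (intro Pc_intros2)
  done

lemma Pc_E2: "Pc (E2 mu mu1 mu2)"
  unfolding E2_def nv_def g1v_def g2v_def rv_def
  apply (simp add: cdot_def sum_3 vector_scalar_mult_def del: gen_sym.simps)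
  apply (intro Pc_intros2)
  done


lemma ev_form1: "complex_of_real r * ev t x y = (\<Sum>(c, d0, d1, d2) \<leftarrow> t.
    c * complex_of_real r * prod_sym d0 x * prod_sym d1 (x - y) * prod_sym d2 y)"
  by (induction t) (auto simp: ev_def algebra_simps)

lemma ev_form2: "complex_of_real r * ev t x y = (\<Sum>(c, d0, d1, d2) \<leftarrow> t.
    c * prod_sym d0 x * prod_sym d1 (x - y) * complex_of_real r * prod_sym d2 y)"
  by (induction t) (auto simp: ev_def algebra_simps)

theorem lemma3p8:
  fixes mu mu1 mu2 :: real
  assumes "mu \<in> {-1, 1}" and "mu1 \<in> {-1, 1}" and "mu2 \<in> {-1, 1}"
  shows "(\<exists>terms :: (complex \<times> gen list \<times> gen list \<times> gen list) list.
            \<forall>xi eta :: real^3. hnorm xi \<noteq> 0 \<and> hnorm eta \<noteq> 0 \<and> hnorm (xi - eta) \<noteq> 0 \<longrightarrow>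
              m_sym mu mu1 mu2 xi eta =
              (\<Sum>(c, d0, d1, d2) \<leftarrow> terms.
                 c * complex_of_real (norm xi) * prod_sym d0 xi * prod_sym d1 (xi - eta) * prod_sym d2 eta))
       \<and> (\<exists>terms :: (complex \<times> gen list \<times> gen list \<times> gen list) list.
            \<forall>xi eta :: real^3. hnorm xi \<noteq> 0 \<and> hnorm eta \<noteq> 0 \<and> hnorm (xi - eta) \<noteq> 0 \<longrightarrow>
              m_sym mu mu1 mu2 xi eta =
              (\<Sum>(c, d0, d1, d2) \<leftarrow> terms.
                 c * prod_sym d0 xi * prod_sym d1 (xi - eta) * complex_of_real (norm eta) * prod_sym d2 eta))"
proof
  obtain t where t: "\<And>xi eta. cond xi eta \<Longrightarrow> E1 mu mu1 mu2 xi eta = ev t xi eta"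
    using Pc_E1[of mu mu1 mu2] unfolding Pc_def by blast
  show "\<exists>terms :: (complex \<times> gen list \<times> gen list \<times> gen list) list.
            \<forall>xi eta :: real^3. hnorm xi \<noteq> 0 \<and> hnorm eta \<noteq> 0 \<and> hnorm (xi - eta) \<noteq> 0 \<longrightarrow>
              m_sym mu mu1 mu2 xi eta =
              (\<Sum>(c, d0, d1, d2) \<leftarrow> terms.
                 c * complex_of_real (norm xi) * prod_sym d0 xi * prod_sym d1 (xi - eta) * prod_sym d2 eta)"
  proof (intro exI allI impI)
    fix xi eta :: "real^3"
    assume "hnorm xi \<noteq> 0 \<and> hnorm eta \<noteq> 0 \<and> hnorm (xi - eta) \<noteq> 0"
    then have c: "cond xi eta" unfolding cond_def .
    show "m_sym mu mu1 mu2 xi eta = (\<Sum>(c, d0, d1, d2) \<leftarrow> t.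
                 c * complex_of_real (norm xi) * prod_sym d0 xi * prod_sym d1 (xi - eta) * prod_sym d2 eta)"
      by (simp only: m_E1[OF c assms(1)] t[OF c] ev_form1)
  qed
  obtain t2 where t2: "\<And>xi eta. cond xi eta \<Longrightarrow> E2 mu mu1 mu2 xi eta = ev t2 xi eta"
    using Pc_E2[of mu mu1 mu2] unfolding Pc_def by blast
  show "\<exists>terms :: (complex \<times> gen list \<times> gen list \<times> gen list) list.
            \<forall>xi eta :: real^3. hnorm xi \<noteq> 0 \<and> hnorm eta \<noteq> 0 \<and> hnorm (xi - eta) \<noteq> 0 \<longrightarrow>
              m_sym mu mu1 mu2 xi eta =
              (\<Sum>(c, d0, d1, d2) \<leftarrow> terms.
                 c * prod_sym d0 xi * prod_sym d1 (xi - eta) * complex_of_real (norm eta) * prod_sym d2 eta)"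
  proof (intro exI allI impI)
    fix xi eta :: "real^3"
    assume "hnorm xi \<noteq> 0 \<and> hnorm eta \<noteq> 0 \<and> hnorm (xi - eta) \<noteq> 0"
    then have c: "cond xi eta" unfolding cond_def .
    show "m_sym mu mu1 mu2 xi eta = (\<Sum>(c, d0, d1, d2) \<leftarrow> t2.
                 c * prod_sym d0 xi * prod_sym d1 (xi - eta) * complex_of_real (norm eta) * prod_sym d2 eta)"
      by (simp only: m_E2[OF c assms(1)] t2[OF c] ev_form2)
  qed
qed

end
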